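(* Let $R=\mathbb{K}[x_{i,i+1},x_{i,i+2}: i\in\mathbb{N}]$, $\varphi:R\to\mathbb{K}[x_i:i\in\mathbb{N}]$ with $\varphi(x_{i,i+1})=x_ix_{i+1}$, $\varphi(x_{i,i+2})=x_ix_{i+2}$, and $I=\ker\varphi$. Let $g=\prod x_{i,j}^{u_{i,j}}-\prod x_{i,j}^{v_{i,j}}\in I$ be a binomial that is not a multiple of any variable, and let $c$ be the smallest vertex adjacent to $g$. Then $w_g([c,c+1])=-w_g([c,c+2])\ne0$.
   Context: $\mathbb{K}$ is a field. $E=\{[i,i+1],[i,i+2]:i\in\mathbb{N}\}$, $w_g([i,j])=u_{i,j}-v_{i,j}$ for $[i,j]\in E$; a vertex $n\in\mathbb{N}$ is adjacent to $g$ if $n\in\{i,j\}$ for some $[i,j]\in E$ with $w_g([i,j])\ne0$ (the statement presupposes such a vertex exists). *)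

theory Defs
  imports Main "HOL-Library.Poly_Mapping"
begin

text \<open>E [i,i+1], [i,i+2] of the graph; the variable x_{i,j} is indexed by the pair (i,j).\<close>
definition Edges :: "(nat \<times> nat) set" where
  "Edges = {(i, i+1) | i. True} \<union> {(i, i+2) | i. True}"

text \<open>Polynomials: finitely supported maps from monomials (exponent vectors) to coefficients.\<close>
type_synonym 'k polyE = "((nat \<times> nat) \<Rightarrow>\<^sub>0 nat) \<Rightarrow>\<^sub>0 'k"
type_synonym 'k polyV = "(nat \<Rightarrow>\<^sub>0 nat) \<Rightarrow>\<^sub>0 'k"

definition R :: "'k::field polyE set" where
  "R = {p :: 'k polyE. \<forall>m \<in> Poly_Mapping.keys p. Poly_Mapping.keys m \<subseteq> Edges}"

definition monomE :: "((nat \<times> nat) \<Rightarrow>\<^sub>0 nat) \<Rightarrow> 'k::field polyE" where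
  "monomE m = Poly_Mapping.single m 1"

definition varE :: "nat \<times> nat \<Rightarrow> 'k::field polyE" where
  "varE e = monomE (Poly_Mapping.single e 1)"

text \<open>Image of a monomial: x_{i,j} \<mapsto> x_i x_j.\<close>
definition phi_mon :: "((nat \<times> nat) \<Rightarrow>\<^sub>0 nat) \<Rightarrow> (nat \<Rightarrow>\<^sub>0 nat)" where
  "phi_mon m = (\<Sum>e \<in> Poly_Mapping.keys m. Poly_Mapping.single (fst e) (Poly_Mapping.lookup m e)
                               + Poly_Mapping.single (snd e) (Poly_Mapping.lookup m e))"

definition phi :: "'k::field polyE \<Rightarrow> 'k polyV" where
  "phi p = (\<Sum>m \<in> Poly_Mapping.keys p. Poly_Mapping.single (phi_mon m) (Poly_Mapping.lookup p m))"

definition kerI :: "'k::field polyE set" where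
  "kerI = {p \<in> R. phi p = 0}"

definition wg :: "((nat \<times> nat) \<Rightarrow>\<^sub>0 nat) \<Rightarrow> ((nat \<times> nat) \<Rightarrow>\<^sub>0 nat) \<Rightarrow> nat \<times> nat \<Rightarrow> int" where
  "wg u v e = int (Poly_Mapping.lookup u e) - int (Poly_Mapping.lookup v e)"

definition adjacent :: "((nat \<times> nat) \<Rightarrow>\<^sub>0 nat) \<Rightarrow> ((nat \<times> nat) \<Rightarrow>\<^sub>0 nat) \<Rightarrow> nat \<Rightarrow> bool" where
  "adjacent u v n \<longleftrightarrow> (\<exists>e \<in> Edges. (n = fst e \<or> n = snd e) \<and> wg u v e \<noteq> 0)"

end

theory Submission
  imports Defs
begin

lemma lookup_phi_mon:
  assumes "finite T" "Poly_Mapping.keys m \<subseteq> T"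
  shows "int (Poly_Mapping.lookup (phi_mon m) n) =
    (\<Sum>e\<in>T. (if fst e = n then int (Poly_Mapping.lookup m e) else 0)
          + (if snd e = n then int (Poly_Mapping.lookup m e) else 0))"
proof -
  have "int (Poly_Mapping.lookup (phi_mon m) n) =
    (\<Sum>e\<in>Poly_Mapping.keys m. (if fst e = n then int (Poly_Mapping.lookup m e) else 0)
          + (if snd e = n then int (Poly_Mapping.lookup m e) else 0))"
    unfolding phi_mon_def lookup_sum lookup_add lookup_single of_nat_sum
    by (intro sum.cong) (auto simp: when_def)
  also have "\<dots> = (\<Sum>e\<in>T. (if fst e = n then int (Poly_Mapping.lookup m e) else 0)
          + (if snd e = n then int (Poly_Mapping.lookup m e) else 0))"
    using assms by (intro sum.mono_neutral_left) (auto simp: in_keys_iff)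
  finally show ?thesis .
qed

theorem corollary6p2:
  fixes u v :: "(nat \<times> nat) \<Rightarrow>\<^sub>0 nat" and g :: "'k::field polyE" and c :: nat
  assumes "Poly_Mapping.keys u \<subseteq> Edges" and "Poly_Mapping.keys v \<subseteq> Edges"
    and "g = monomE u - monomE v"
    and "g \<in> kerI"
    and "\<not> (\<exists>e \<in> Edges. \<exists>h \<in> R. g = varE e * h)"
    and "c = (LEAST n. adjacent u v n)"
  shows "wg u v (c, c+1) = - wg u v (c, c+2) \<and> wg u v (c, c+1) \<noteq> 0"
proof -
  have uv: "u \<noteq> v"
  proof
    assume "u = v"
    hence "g = varE (0,1) * 0" using assms(3) by simp
    moreover have "(0::nat,1::nat) \<in> Edges" unfolding Edges_def by auto
    moreover have "(0::'k polyE) \<in> R" unfolding R_def by simp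
    ultimately show False using assms(5) by blast
  qed
  have gl: "Poly_Mapping.lookup g m = (if m = u then 1 else if m = v then -1 else 0)" for m
    using uv unfolding assms(3) monomE_def by (auto simp: lookup_minus lookup_single when_def)
  have kg: "Poly_Mapping.keys g = {u, v}"
  proof (rule set_eqI)
    fix m show "m \<in> Poly_Mapping.keys g \<longleftrightarrow> m \<in> {u, v}"
      unfolding in_keys_iff gl by (cases "m = u"; cases "m = v") simp_all
  qed
  have pg: "phi g = 0" using assms(4) unfolding kerI_def by simp
  have pm: "phi_mon u = phi_mon v"
  proof (rule ccontr)
    assume ne: "phi_mon u \<noteq> phi_mon v"
    have "Poly_Mapping.lookup (phi g) (phi_mon u) = 1"
      unfolding phi_def kg lookup_sum using uv ne by (simp add: gl lookup_single when_def)
    thus False using pg by simp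
  qed
  define a where "a = (c, c+1)"
  define b where "b = (c, c+2)"
  define T where "T = Poly_Mapping.keys u \<union> Poly_Mapping.keys v \<union> {a, b}"
  have fT: "finite T" unfolding T_def by simp
  have TE: "T \<subseteq> Edges" using assms(1,2) unfolding T_def a_def b_def Edges_def by auto
  define w where "w = wg u v"
  have ex: "\<exists>n. adjacent u v n"
  proof -
    have "\<exists>e. Poly_Mapping.lookup u e \<noteq> Poly_Mapping.lookup v e"
    proof (rule ccontr)
      assume "\<not> ?thesis"
      hence "u = v" by (intro poly_mapping_eqI) blast
      thus False using uv by simp
    qed
    then obtain e where "Poly_Mapping.lookup u e \<noteq> Poly_Mapping.lookup v e" by blast
    moreover have "e \<in> Edges"
    proof (cases "Poly_Mapping.lookup u e = 0")
      case True thus ?thesis using calculation assms(2) by (auto simp: in_keys_iff)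
    next
      case False thus ?thesis using assms(1) by (auto simp: in_keys_iff)
    qed
    ultimately show ?thesis unfolding adjacent_def wg_def by auto
  qed
  have cadj: "adjacent u v c" using LeastI_ex[OF ex] assms(6) by simp
  have cmin: "adjacent u v n \<Longrightarrow> c \<le> n" for n using assms(6) Least_le by blast
  have key: "(if fst e = c then w e else 0) + (if snd e = c then w e else 0)
        = (if e \<in> {a, b} then w e else 0)" if "e \<in> Edges" for e
  proof (cases "w e = 0")
    case True thus ?thesis by (simp only: True if_cancel add.right_neutral)
  next
    case False
    from that obtain i where ei: "e = (i, i+1) \<or> e = (i, i+2)" unfolding Edges_def by auto
    have "adjacent u v i" using False that ei unfolding adjacent_def w_def by (metis fst_conv)
    hence "c \<le> i" by (rule cmin)
    thus ?thesis using ei unfolding a_def b_def by auto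
  qed
  have ku: "Poly_Mapping.keys u \<subseteq> T" and kv: "Poly_Mapping.keys v \<subseteq> T" unfolding T_def by auto
  have "(\<Sum>e\<in>T. (if fst e = c then w e else 0) + (if snd e = c then w e else 0))
     = int (Poly_Mapping.lookup (phi_mon u) c) - int (Poly_Mapping.lookup (phi_mon v) c)"
    unfolding lookup_phi_mon[OF fT ku] lookup_phi_mon[OF fT kv] sum_subtractf[symmetric]
    by (rule sum.cong[OF refl]) (simp add: w_def wg_def)
  hence "(\<Sum>e\<in>T. (if fst e = c then w e else 0) + (if snd e = c then w e else 0)) = 0"
    using pm by simp
  hence "(\<Sum>e\<in>T. (if e \<in> {a, b} then w e else 0)) = 0"
  proof -
    assume h: "(\<Sum>e\<in>T. (if fst e = c then w e else 0) + (if snd e = c then w e else 0)) = 0"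
    have "(\<Sum>e\<in>T. (if fst e = c then w e else 0) + (if snd e = c then w e else 0))
        = (\<Sum>e\<in>T. (if e \<in> {a, b} then w e else 0))"
      by (rule sum.cong[OF refl]) (use key TE in blast)
    thus ?thesis using h by simp
  qed
  moreover have "(\<Sum>e\<in>T. (if e \<in> {a, b} then w e else 0)) = (\<Sum>e\<in>{a,b}. w e)"
  proof -
    have "T \<inter> {e. e \<in> {a, b}} = {a, b}" unfolding T_def by auto
    thus ?thesis using fT by (simp only: sum.If_cases) simp
  qed
  moreover have "a \<noteq> b" unfolding a_def b_def by simp
  ultimately have sab: "w a + w b = 0" by simp
  from cadj obtain e where e: "e \<in> Edges" "c = fst e \<or> c = snd e" "w e \<noteq> 0"
    unfolding adjacent_def w_def by auto
  have "e \<in> {a, b}" using key[OF e(1)] e by (auto split: if_splits)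
  hence "w a \<noteq> 0" using sab e(3) by auto
  thus ?thesis using sab unfolding w_def a_def b_def by auto
qed

end
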